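(* Let $L>0$ and $\rho_{0,L}\in L^\infty(\mathbb T_L)$ (nonnegative, $c_L=\int_{\mathbb T_L}\rho_{0,L}\le1$). Then there exists $T_0=T_0(\|\rho_{0,L}\|_{L^\infty},\|K'\|_{L^\infty})>0$ such that for every $N\in\mathbb N$ the deterministic particle approximation $\rho^N_L$ starting from $\rho_{0,L}$ is well defined on $[0,T_0)$.
   Context: Standing assumptions: $K:\mathbb R\to\mathbb R$ satisfies $K(z)=K(|z|)$, $K\in C^0(\mathbb R)\cap C^2(\mathbb R\setminus\{0\})$, $K,K'\in L^\infty(\mathbb R)$, $K''\in L^\infty(\mathbb R\setminus\{0\})$, $\|K'\|_{L^1(\mathbb R)}<\infty$. $W:[0,\infty)\to[0,\infty)$ and $\phi(\rho):=\rho W'(\rho)-W(\rho)$ is $C^1$ with $\phi(0)=0$, $\phi$ strictly increasing, $\phi'(\rho)\rho\le c_0\phi(\rho)$, $\phi(\rho)\le\max\{\rho,c_0W(\rho)\}$ for some $c_0>0$, and there are $c_1,c_2>0$, $\hat\rho<1<\bar\rho$ with $\phi(\rho)\le c_1\rho$ for $\rho\le\hat\rho$ and $\phi(\rho)\ge c_2\rho$ for $\rho\ge\bar\rho$. $\mathbb T_L=\mathbb R/L\mathbb Z\cong[-L/2,L/2)$. Deterministic particle approximation: set $x_0=-L/2$, $x_k=\sup\{x:\int_{x_{k-1}}^x\rho_{0,L}<c_L/N\}$, $k=1,\dots,N$; particles $x_k(t)$ (indices mod $N$) solve $\dot x_k=-\frac{c_L}{N}\sum_{j\ne k}K'(x_k-x_j)-\frac{N}{c_L}[\phi(\rho_k)-\phi(\rho_{k-1})]$,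 $x_k(0)=x_k$, with $\rho_k(t)=\frac{c_L}{N(x_{k+1}(t)-x_k(t))}$, and $\rho^N_L(t,x)=\sum_{k=0}^{N-1}\rho_k(t)\chi_{[x_k(t),x_{k+1}(t))}(x)$; it is well-defined on $[0,T_0)$ if the solution exists there with $x_0(t)<\dots<x_{N-1}(t)$ for all $t\in[0,T_0)$. *)

theory Defs
  imports "HOL-Analysis.Analysis" "HOL-Probability.Essential_Supremum"
begin

definition mass_L :: "real \<Rightarrow> (real \<Rightarrow> real) \<Rightarrow> real" where
  "mass_L L rho0 = (LINT y:{-L/2..L/2}|lborel. rho0 y)"

fun init_pos :: "real \<Rightarrow> (real \<Rightarrow> real) \<Rightarrow> nat \<Rightarrow> nat \<Rightarrow> real" where
  "init_pos L rho0 N 0 = - L / 2"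
| "init_pos L rho0 N (Suc k) =
     Sup {x. (LINT y:{init_pos L rho0 N k..x}|lborel. rho0 y) < mass_L L rho0 / real N}"

text \<open>Right neighbour of particle k (indices mod N, with x_N = x_0 + L on the torus).\<close>
definition next_pos :: "real \<Rightarrow> nat \<Rightarrow> (nat \<Rightarrow> real \<Rightarrow> real) \<Rightarrow> nat \<Rightarrow> real \<Rightarrow> real" where
  "next_pos L N x k t = (if Suc k = N then x 0 t + L else x (Suc k) t)"

definition disc_rho :: "real \<Rightarrow> real \<Rightarrow> nat \<Rightarrow> (nat \<Rightarrow> real \<Rightarrow> real) \<Rightarrow> nat \<Rightarrow> real \<Rightarrow> real" where
  "disc_rho L c N x k t = c / (real N * (next_pos L N x k t - x k t))"

definition prev_idx :: "nat \<Rightarrow> nat \<Rightarrow> nat" where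
  "prev_idx N k = (if k = 0 then N - 1 else k - 1)"

definition particle_well_defined ::
  "(real \<Rightarrow> real) \<Rightarrow> (real \<Rightarrow> real) \<Rightarrow> real \<Rightarrow> (real \<Rightarrow> real) \<Rightarrow> nat \<Rightarrow> real \<Rightarrow> bool" where
  "particle_well_defined K' phi L rho0 N T0 \<longleftrightarrow>
     (let c = mass_L L rho0 in
      \<exists>x :: nat \<Rightarrow> real \<Rightarrow> real.
        (\<forall>k<N. x k 0 = init_pos L rho0 N k) \<and>
        (\<forall>t\<in>{0..<T0}. \<forall>k. Suc k < N \<longrightarrow> x k t < x (Suc k) t) \<and>
        (\<forall>k<N. \<forall>t\<in>{0..<T0}.
           ((\<lambda>s. x k s) has_real_derivative
              (- (c / real N) * (\<Sum>j\<in>{..<N} - {k}. K' (x k t - x j t))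
               - (real N / c) * (phi (disc_rho L c N x k t)
                                 - phi (disc_rho L c N x (prev_idx N k) t))))
           (at t within {0..<T0})))"

end

theory Submission
  imports Defs
begin

lemma lip_cont:
  fixes f :: "(nat \<Rightarrow> real) \<Rightarrow> nat \<Rightarrow> real"
  assumes lip: "\<And>y z. \<bar>f y k - f z k\<bar> \<le> Lp * (\<Sum>j<N. \<bar>y j - z j\<bar>)"
    and cY: "\<forall>j<N. continuous_on S (\<lambda>s. Y s j)"
  shows "continuous_on S (\<lambda>s. f (Y s) k)"
  unfolding continuous_on_def
proof
  fix s0 assume s0: "s0 \<in> S"
  have "((\<lambda>s. Lp * (\<Sum>j<N. \<bar>Y s j - Y s0 j\<bar>)) \<longlongrightarrow> Lp * (\<Sum>j<N. \<bar>Y s0 j - Y s0 j\<bar>)) (at s0 within S)"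
    using cY s0 unfolding continuous_on_def
    by (intro tendsto_intros) auto
  hence g0: "((\<lambda>s. Lp * (\<Sum>j<N. \<bar>Y s j - Y s0 j\<bar>)) \<longlongrightarrow> 0) (at s0 within S)" by simp
  have "((\<lambda>s. f (Y s) k - f (Y s0) k) \<longlongrightarrow> 0) (at s0 within S)"
    by (rule Lim_null_comparison[OF _ g0]) (use lip in auto)
  thus "((\<lambda>s. f (Y s) k) \<longlongrightarrow> f (Y s0) k) (at s0 within S)" by (rule LIM_zero_cancel)
qed

lemma int_pow:
  assumes "0 \<le> t"
  shows "integral {0..t} (\<lambda>s. C * s ^ n) = C * t ^ Suc n / real (Suc n)"
proof -
  have "((\<lambda>s. C * s ^ n) has_integral (\<lambda>s. C * s ^ Suc n / real (Suc n)) t - (\<lambda>s. C * s ^ Suc n / real (Suc n)) 0) {0..t}"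
  proof (rule fundamental_theorem_of_calculus[OF assms], unfold has_real_derivative_iff_has_vector_derivative[symmetric])
    fix x :: real
    have "((\<lambda>s. C * s ^ Suc n / real (Suc n)) has_real_derivative C * (real (Suc n) * x ^ n) / real (Suc n)) (at x)"
    proof -
      have d1: "((\<lambda>s. s ^ Suc n) has_real_derivative real (Suc n) * x ^ n) (at x)"
        using DERIV_pow[of "Suc n" x] by simp
      show ?thesis by (intro DERIV_cdivide DERIV_cmult d1)
    qed
    also have "C * (real (Suc n) * x ^ n) / real (Suc n) = C * x ^ n" by simp
    finally show "((\<lambda>s. C * s ^ Suc n / real (Suc n)) has_real_derivative C * x ^ n) (at x within {0..t})"
      by (rule has_field_derivative_at_within)
  qed
  from integral_unique[OF this] show ?thesis by simp
qed

lemma picard: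
  fixes f :: "(nat \<Rightarrow> real) \<Rightarrow> nat \<Rightarrow> real" and x0 :: "nat \<Rightarrow> real"
  assumes lip: "\<And>y z k. k < N \<Longrightarrow> \<bar>f y k - f z k\<bar> \<le> Lp * (\<Sum>j<N. \<bar>y j - z j\<bar>)"
    and Lp: "0 \<le> Lp" and T: "0 \<le> T"
  shows "\<exists>X. (\<forall>k<N. X 0 k = x0 k) \<and>
     (\<forall>k<N. \<forall>t\<in>{0..T}. ((\<lambda>s. X s k) has_real_derivative f (X t) k) (at t within {0..T}))"
proof -
  define P where "P X = (\<lambda>t k. x0 k + integral {0..t} (\<lambda>s. f (X s) k))" for X :: "real \<Rightarrow> nat \<Rightarrow> real"
  define Xn where "Xn n = (P ^^ n) (\<lambda>t. x0)" for n
  have XS: "Xn (Suc n) = P (Xn n)" for n by (simp add: Xn_def)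
  have X0: "Xn 0 t = x0" for t by (simp add: Xn_def)
  have contf: "continuous_on {0..T} (\<lambda>s. f (Y s) k)"
    if "\<forall>j<N. continuous_on {0..T} (\<lambda>s. Y s j)" "k < N" for Y k
    using lip_cont[of f k Lp N "{0..T}" Y] lip that by blast
  have derP: "((\<lambda>t. P Y t k) has_real_derivative f (Y t) k) (at t within {0..T})"
    if "\<forall>j<N. continuous_on {0..T} (\<lambda>s. Y s j)" "k < N" "t \<in> {0..T}" for Y k t
  proof -
    have "((\<lambda>t. integral {0..t} (\<lambda>s. f (Y s) k)) has_real_derivative f (Y t) k) (at t within {0..T})"
      by (rule integral_has_real_derivative[OF contf[OF that(1,2)] that(3)])
    hence "((\<lambda>t. x0 k + integral {0..t} (\<lambda>s. f (Y s) k)) has_real_derivative 0 + f (Y t) k) (at t within {0..T})"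
      by (intro DERIV_add DERIV_const)
    thus ?thesis by (simp add: P_def)
  qed
  have contP: "continuous_on {0..T} (\<lambda>t. P Y t k)"
    if "\<forall>j<N. continuous_on {0..T} (\<lambda>s. Y s j)" "k < N" for Y k
    by (rule DERIV_continuous_on[OF derP[OF that]])
  have contXn: "\<forall>j<N. continuous_on {0..T} (\<lambda>s. Xn n s j)" for n
  proof (induction n)
    case 0 then show ?case by (simp add: X0)
  next
    case (Suc n) then show ?case unfolding XS using contP by blast
  qed
  have intf: "(\<lambda>s. f (Xn n s) k) integrable_on {0..t}" if "k < N" "t \<in> {0..T}" for n k t
    using that(2) by (intro integrable_subinterval_real[OF integrable_continuous_real[OF contf[OF contXn[of n] that(1)]]]) auto
  define L' where "L' = real N * Lp"
  define A where "A = T * (\<Sum>k<N. \<bar>f x0 k\<bar>)"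
  have L'0: "0 \<le> L'" using Lp by (simp add: L'_def)
  have A0: "0 \<le> A" using T by (simp add: A_def sum_nonneg)
  have dist: "\<forall>t\<in>{0..T}. (\<Sum>k<N. \<bar>Xn (Suc n) t k - Xn n t k\<bar>) \<le> A * (L' * t) ^ n / fact n" for n
  proof (induction n)
    case 0
    show ?case
    proof
      fix t assume t: "t \<in> {0..T}"
      have "(\<Sum>k<N. \<bar>Xn (Suc 0) t k - Xn 0 t k\<bar>) = (\<Sum>k<N. t * \<bar>f x0 k\<bar>)"
        using t by (intro sum.cong) (auto simp: XS X0 P_def abs_mult)
      also have "\<dots> \<le> (\<Sum>k<N. T * \<bar>f x0 k\<bar>)"
        using t by (intro sum_mono mult_right_mono) auto
      finally show "(\<Sum>k<N. \<bar>Xn (Suc 0) t k - Xn 0 t k\<bar>) \<le> A * (L' * t) ^ 0 / fact 0"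
        by (simp add: A_def sum_distrib_left)
    qed
  next
    case (Suc n)
    show ?case
    proof
      fix t assume t: "t \<in> {0..T}"
      have one: "\<bar>Xn (Suc (Suc n)) t k - Xn (Suc n) t k\<bar> \<le> Lp * (A * L' ^ n / fact n) * t ^ Suc n / real (Suc n)"
        if k: "k < N" for k
      proof -
        have "Xn (Suc (Suc n)) t k - Xn (Suc n) t k
              = integral {0..t} (\<lambda>s. f (Xn (Suc n) s) k - f (Xn n s) k)"
          by (subst integral_diff[OF intf[OF k t] intf[OF k t]]) (simp add: XS P_def)
        also have "\<bar>\<dots>\<bar> \<le> integral {0..t} (\<lambda>s. Lp * (A * L' ^ n / fact n) * s ^ n)"
        proof -
          have "norm (integral {0..t} (\<lambda>s. f (Xn (Suc n) s) k - f (Xn n s) k))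
                \<le> integral {0..t} (\<lambda>s. Lp * (A * L' ^ n / fact n) * s ^ n)"
          proof (rule integral_norm_bound_integral)
            show "(\<lambda>s. f (Xn (Suc n) s) k - f (Xn n s) k) integrable_on {0..t}"
              by (intro integrable_diff intf k t)
            show "(\<lambda>s. Lp * (A * L' ^ n / fact n) * s ^ n) integrable_on {0..t}"
              by (intro integrable_continuous_real continuous_intros)
            fix s assume s: "s \<in> {0..t}"
            have "norm (f (Xn (Suc n) s) k - f (Xn n s) k) \<le> Lp * (\<Sum>j<N. \<bar>Xn (Suc n) s j - Xn n s j\<bar>)"
              using lip[OF k] by simp
            also have "\<dots> \<le> Lp * (A * (L' * s) ^ n / fact n)"
              using Suc.IH s t Lp by (intro mult_left_mono) auto
            finally show "norm (f (Xn (Suc n) s) k - f (Xn n s) k) \<le> Lp * (A * L' ^ n / fact n) * s ^ n"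
              by (simp add: power_mult_distrib)
          qed
          thus ?thesis by simp
        qed
        also have "\<dots> = Lp * (A * L' ^ n / fact n) * t ^ Suc n / real (Suc n)"
          using t by (intro int_pow) auto
        finally show ?thesis .
      qed
      have "(\<Sum>k<N. \<bar>Xn (Suc (Suc n)) t k - Xn (Suc n) t k\<bar>)
            \<le> (\<Sum>k<N. Lp * (A * L' ^ n / fact n) * t ^ Suc n / real (Suc n))"
        by (intro sum_mono one) auto
      also have "\<dots> = A * (L' * t) ^ Suc n / fact (Suc n)"
        by (simp add: L'_def power_mult_distrib field_simps)
      finally show "(\<Sum>k<N. \<bar>Xn (Suc (Suc n)) t k - Xn (Suc n) t k\<bar>) \<le> A * (L' * t) ^ Suc n / fact (Suc n)" .
    qed
  qed
  define M where "M n = A * (L' * T) ^ n / fact n" for n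
  have summM: "summable M"
  proof -
    have "summable (\<lambda>n. A * ((L' * T) ^ n /\<^sub>R fact n))"
      by (intro summable_mult summable_exp_generic)
    moreover have "M = (\<lambda>n. A * ((L' * T) ^ n /\<^sub>R fact n))"
      by (rule ext) (simp add: M_def divide_inverse)
    ultimately show ?thesis by simp
  qed
  have termb: "norm (Xn (Suc i) t k - Xn i t k) \<le> M i" if "t \<in> {0..T}" "k < N" for i t k
  proof -
    have "norm (Xn (Suc i) t k - Xn i t k) \<le> (\<Sum>k<N. \<bar>Xn (Suc i) t k - Xn i t k\<bar>)"
      unfolding real_norm_def using that(2) by (intro member_le_sum) auto
    also have "\<dots> \<le> A * (L' * t) ^ i / fact i" using dist that(1) by blast
    also have "\<dots> \<le> M i" unfolding M_def using that(1) A0 L'0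
      by (intro divide_right_mono mult_left_mono power_mono mult_left_mono) auto
    finally show ?thesis .
  qed
  define X where "X t k = x0 k + (\<Sum>i. Xn (Suc i) t k - Xn i t k)" for t k
  have ulim: "uniform_limit {0..T} (\<lambda>n t. Xn n t k) (\<lambda>t. X t k) sequentially" if k: "k < N" for k
  proof -
    have u: "uniform_limit {0..T} (\<lambda>n t. \<Sum>i<n. Xn (Suc i) t k - Xn i t k) (\<lambda>t. \<Sum>i. Xn (Suc i) t k - Xn i t k) sequentially"
      by (rule Weierstrass_m_test[OF _ summM]) (use termb k in auto)
    have eq: "Xn n t k = x0 k + (\<Sum>i<n. Xn (Suc i) t k - Xn i t k)" for n t
      by (subst sum_lessThan_telescope[where f="\<lambda>i. Xn i t k"]) (simp add: X0)
    show ?thesis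
      unfolding uniform_limit_iff
    proof (intro allI impI)
      fix e :: real assume e: "0 < e"
      have dd: "dist (Xn n t k) (X t k) = dist (\<Sum>i<n. Xn (Suc i) t k - Xn i t k) (\<Sum>i. Xn (Suc i) t k - Xn i t k)" for n t
        by (subst eq[of n t]) (simp add: X_def dist_real_def)
      from u e have "\<forall>\<^sub>F n in sequentially. \<forall>t\<in>{0..T}. dist (\<Sum>i<n. Xn (Suc i) t k - Xn i t k) (\<Sum>i. Xn (Suc i) t k - Xn i t k) < e"
        unfolding uniform_limit_iff by blast
      thus "\<forall>\<^sub>F n in sequentially. \<forall>t\<in>{0..T}. dist (Xn n t k) (X t k) < e"
        by (simp only: dd)
    qed
  qed
  have contX: "\<forall>j<N. continuous_on {0..T} (\<lambda>s. X s j)"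
  proof (intro allI impI)
    fix j assume j: "j < N"
    show "continuous_on {0..T} (\<lambda>s. X s j)"
      by (rule uniform_limit_theorem[OF _ ulim[OF j]]) (use contXn j in \<open>auto intro!: always_eventually\<close>)
  qed
  have fix_eq: "X t k = P X t k" if k: "k < N" and t: "t \<in> {0..T}" for t k
  proof -
    have l1: "(\<lambda>n. Xn (Suc n) t k) \<longlonglongrightarrow> X t k"
      using tendsto_uniform_limitI[OF ulim[OF k] t] by (rule LIMSEQ_Suc)
    have l2: "(\<lambda>n. Xn (Suc n) t k) \<longlonglongrightarrow> P X t k"
    proof (rule tendstoI)
      fix r :: real assume r: "0 < r"
      define e where "e = r / (T * Lp * real N + 1)"
      have den: "0 < T * Lp * real N + 1" using T Lp by (intro add_nonneg_pos mult_nonneg_nonneg) auto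
      have e: "0 < e" using r den by (simp add: e_def)
      have ev: "\<forall>\<^sub>F n in sequentially. \<forall>j\<in>{..<N}. \<forall>s\<in>{0..T}. dist (Xn n s j) (X s j) < e"
        using ulim e unfolding uniform_limit_iff by (intro eventually_ball_finite) auto
      show "\<forall>\<^sub>F n in sequentially. dist (Xn (Suc n) t k) (P X t k) < r"
        using ev
      proof eventually_elim
        case (elim n)
        have intX: "(\<lambda>s. f (X s) k) integrable_on {0..t}"
          using t by (intro integrable_subinterval_real[OF integrable_continuous_real[OF contf[OF contX k]]]) auto
        have "dist (Xn (Suc n) t k) (P X t k) = norm (integral {0..t} (\<lambda>s. f (Xn n s) k - f (X s) k))"
          by (simp add: XS P_def dist_real_def integral_diff[OF intf[OF k t] intX])
        also have "\<dots> \<le> integral {0..t} (\<lambda>s. Lp * (real N * e))"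
        proof (rule integral_norm_bound_integral)
          show "(\<lambda>s. f (Xn n s) k - f (X s) k) integrable_on {0..t}"
            by (intro integrable_diff intf k t intX)
          show "(\<lambda>s. Lp * (real N * e)) integrable_on {0..t}" by (rule integrable_const_ivl)
          fix s assume s: "s \<in> {0..t}"
          have "norm (f (Xn n s) k - f (X s) k) \<le> Lp * (\<Sum>j<N. \<bar>Xn n s j - X s j\<bar>)"
            using lip[OF k] by simp
          also have "\<dots> \<le> Lp * (\<Sum>j<N. e)"
            using elim s t Lp by (intro mult_left_mono sum_mono) (auto simp: dist_real_def less_imp_le)
          finally show "norm (f (Xn n s) k - f (X s) k) \<le> Lp * (real N * e)" by simp
        qed
        also have "\<dots> = t * (Lp * real N * e)" using t by simp
        also have "\<dots> \<le> T * (Lp * real N * e)"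
          using t Lp e by (intro mult_right_mono) auto
        also have "\<dots> < r"
        proof -
          have "T * (Lp * real N * e) = r * (T * Lp * real N) / (T * Lp * real N + 1)"
            by (simp add: e_def)
          also have "\<dots> < r" using r den by (simp add: divide_less_eq)
          finally show ?thesis .
        qed
        finally show ?case .
      qed
    qed
    show ?thesis using LIMSEQ_unique[OF l1 l2] .
  qed
  show ?thesis
  proof (intro exI conjI allI impI ballI)
    fix k assume k: "k < N"
    show "X 0 k = x0 k" using fix_eq[OF k, of 0] T by (simp add: P_def)
    fix t assume t: "t \<in> {0..T}"
    show "((\<lambda>s. X s k) has_real_derivative f (X t) k) (at t within {0..T})"
      by (rule has_field_derivative_transform_within[OF derP[OF contX k t] zero_less_one t])
         (use fix_eq k in auto)
  qed
qed

lemma init_props: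
  fixes rho0 :: "real \<Rightarrow> real"
  assumes L: "L > 0" and meas: "rho0 \<in> borel_measurable lborel" and nn: "\<forall>y. rho0 y \<ge> 0"
    and ess: "esssup lborel (\<lambda>y. ereal (rho0 y)) = ereal M"
    and cpos: "0 < mass_L L rho0" and N: "N \<ge> 1"
  shows "(\<forall>k. Suc k < N \<longrightarrow> init_pos L rho0 N k < init_pos L rho0 N (Suc k))
       \<and> init_pos L rho0 N (N - 1) < init_pos L rho0 N 0 + L"
proof -
  define c where "c = mass_L L rho0"
  define M' where "M' = max M 0"
  define r where "r y = min (rho0 y) M'" for y
  have M'0: "0 \<le> M'" by (simp add: M'_def)
  have AE1: "AE y in lborel. rho0 y \<le> M"
    using esssup_AE[where M=lborel and f="\<lambda>y. ereal (rho0 y)"] ess by simp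
  have AEeq: "AE y in lborel. rho0 y = r y"
    using AE1 by eventually_elim (auto simp: r_def M'_def)
  have rmeas: "r \<in> borel_measurable lborel"
    unfolding r_def using meas by measurable
  have r0: "0 \<le> r y" "r y \<le> M'" for y
    using nn M'0 by (auto simp: r_def)
  have sint: "set_integrable lborel {a..b} r" for a b
  proof (rule set_integrable_bound[OF borel_integrable_atLeastAtMost'[of a b "\<lambda>_. M'"]])
    show "continuous_on {a..b} (\<lambda>_. M')" by simp
    show "set_borel_measurable lborel {a..b} r"
      unfolding set_borel_measurable_def using rmeas by measurable
    show "AE x\<in>{a..b} in lborel. norm (r x) \<le> norm M'"
      using r0 M'0 by auto
  qed
  have eqint: "(LINT y:{a..b}|lborel. rho0 y) = integral {a..b} r" for a b
  proof -
    have "(LINT y:{a..b}|lborel. rho0 y) = (LINT y:{a..b}|lborel. r y)"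
      by (rule set_lebesgue_integral_cong_AE) (use meas rmeas AEeq in auto)
    also have "\<dots> = integral {a..b} r" by (rule set_borel_integral_eq_integral(2)[OF sint])
    finally show ?thesis .
  qed
  have intg: "r integrable_on {a..b}" for a b by (rule set_borel_integral_eq_integral(1)[OF sint])
  define F where "F a b = integral {a..b} r" for a b
  have Fadd: "F a d = F a b + F b d" if "a \<le> b" "b \<le> d" for a b d
    unfolding F_def using Henstock_Kurzweil_Integration.integral_combine[OF that intg] by simp
  have Fnn: "0 \<le> F a b" for a b
    unfolding F_def by (rule integral_nonneg[OF intg]) (use r0 in auto)
  have Fle: "F a b \<le> M' * (b - a)" if "a \<le> b" for a b
  proof -
    have "F a b \<le> integral {a..b} (\<lambda>_. M')"
      unfolding F_def by (rule integral_le[OF intg]) (use r0 in auto)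
    also have "\<dots> = M' * (b - a)" using that by simp
    finally show ?thesis .
  qed
  have Fempty: "F a b = 0" if "b \<le> a" for a b
  proof (cases "b < a")
    case True then show ?thesis by (simp add: F_def)
  next
    case False then have "b = a" using that by simp
    then show ?thesis using Fle[of a a] Fnn[of a a] by simp
  qed
  have Fmono: "F a x \<le> F a y" if "x \<le> y" for a x y
  proof (cases "a \<le> x")
    case True then show ?thesis using Fadd[OF True that] Fnn[of x y] by simp
  next
    case False then show ?thesis using Fempty[of x a] Fnn[of a y] by simp
  qed
  have Flip: "F a y \<le> F a x + M' * (y - x)" if "x \<le> y" for a x y
  proof (cases "a \<le> x")
    case True then show ?thesis using Fadd[OF True that] Fle[OF that] by simp
  next
    case False
    show ?thesis
    proof (cases "a \<le> y")
      case True
      then show ?thesis using Fle[OF True] Fempty[of x a] False M'0 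
        by (smt (verit, best) mult_left_mono)
    next
      case False2: False
      then show ?thesis using Fempty[of y a] Fempty[of x a] False that M'0 by simp
    qed
  qed
  have cF: "c = F (-L/2) (L/2)" by (simp add: c_def mass_L_def eqint F_def)
  have c0: "0 < c" using cpos by (simp add: c_def)
  define x where "x k = init_pos L rho0 N k" for k
  have xS: "x (Suc k) = Sup {y. F (x k) y < c / real N}" for k
    by (simp add: x_def eqint F_def c_def)
  have x0: "x 0 = - L / 2" by (simp add: x_def)
  define P where "P k \<longleftrightarrow> -L/2 \<le> x k \<and> x k < L/2 \<and> F (-L/2) (x k) \<le> real k * c / real N" for k
  have step: "P (Suc k) \<and> x k < x (Suc k)" if Pk: "P k" and kN: "Suc k < N" for k
  proof -
    define a where "a = x k"
    define S where "S = {y. F a y < c / real N}"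
    define e where "e = c / (real N * (M' + 1))"
    have Npos: "0 < real N" using N by simp
    have e0: "0 < e" using c0 Npos M'0 by (simp add: e_def)
    have cN: "0 < c / real N" using c0 Npos by simp
    have aS: "a + e \<in> S"
    proof -
      have "F a (a + e) \<le> F a a + M' * e" using Flip[of a "a + e" a] e0 by simp
      also have "F a a = 0" by (rule Fempty) simp
      also have "0 + M' * e < c / real N"
      proof -
        have "M' * e = (c / real N) * (M' / (M' + 1))" by (simp add: e_def field_simps)
        also have "\<dots> < (c / real N) * 1" using cN M'0 by (intro mult_strict_left_mono) auto
        finally show ?thesis by simp
      qed
      finally show ?thesis by (simp add: S_def)
    qed
    have aL: "-L/2 \<le> a" "a < L/2" "F (-L/2) a \<le> real k * c / real N"
      using Pk by (auto simp: P_def a_def)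
    have big: "F a y \<ge> 2 * c / real N" if "L/2 \<le> y" for y
    proof -
      have "F (-L/2) (L/2) = F (-L/2) a + F a (L/2)" by (rule Fadd) (use aL in auto)
      hence "F a (L/2) = c - F (-L/2) a" using cF by simp
      also have "\<dots> \<ge> c - real k * c / real N" using aL by simp
      also have "c - real k * c / real N = (real N - real k) * c / real N"
        using Npos by (simp add: field_simps)
      also have "\<dots> \<ge> 2 * c / real N"
      proof -
        have "2 \<le> real N - real k" using kN by simp
        thus ?thesis using c0 Npos by (intro divide_right_mono mult_right_mono) auto
      qed
      finally have "2 * c / real N \<le> F a (L/2)" .
      also have "\<dots> \<le> F a y" by (rule Fmono[OF that])
      finally show ?thesis .
    qed
    have Sbd: "y < L/2" if "y \<in> S" for y
    proof (rule ccontr)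
      assume "\<not> y < L/2"
      hence "F a y \<ge> 2 * c / real N" using big by simp
      moreover have "F a y < c / real N" using that by (simp add: S_def)
      ultimately show False using cN by simp
    qed
    have bdd: "bdd_above S" using Sbd by (meson bdd_above.I less_imp_le)
    have ne: "S \<noteq> {}" using aS by blast
    define s where "s = Sup S"
    have s1: "a + e \<le> s" unfolding s_def by (rule cSup_upper[OF aS bdd])
    have s2: "s \<le> L/2" unfolding s_def by (rule cSup_least[OF ne]) (use Sbd in force)
    have Fs: "F a s \<le> c / real N"
    proof (rule ccontr)
      assume "\<not> F a s \<le> c / real N"
      hence gt: "F a s > c / real N" by simp
      define d where "d = (F a s - c / real N) / (M' + 1)"
      have d0: "0 < d" using gt M'0 by (simp add: d_def)
      have "s - d < Sup S" using d0 by (simp add: s_def)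
      then obtain z where z: "z \<in> S" "s - d < z" using less_cSup_iff[OF ne bdd] by blast
      have "F a s \<le> F a (s - d) + M' * d" using Flip[of "s - d" s a] d0 by simp
      also have "F a (s - d) \<le> F a z" using Fmono[of "s - d" z a] z by simp
      also have "F a z < c / real N" using z by (simp add: S_def)
      finally have "F a s < c / real N + M' * d" by simp
      moreover have "M' * d \<le> F a s - c / real N"
      proof -
        have "M' * d = (F a s - c / real N) * (M' / (M' + 1))" by (simp add: d_def field_simps)
        also have "\<dots> \<le> (F a s - c / real N) * 1" using gt M'0 by (intro mult_left_mono) auto
        finally show ?thesis by simp
      qed
      ultimately show False by simp
    qed
    have s3: "s < L/2"
    proof (rule ccontr)
      assume "\<not> s < L/2"
      hence "F a s \<ge> 2 * c / real N" using big by simp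
      thus False using Fs cN by simp
    qed
    have xs: "x (Suc k) = s" by (simp add: xS s_def S_def a_def)
    have "F (-L/2) s = F (-L/2) a + F a s" by (rule Fadd) (use aL s1 e0 in auto)
    also have "\<dots> \<le> real k * c / real N + c / real N" using aL Fs by simp
    also have "\<dots> = real (Suc k) * c / real N" by (simp add: add_divide_distrib[symmetric] algebra_simps)
    finally have "F (-L/2) s \<le> real (Suc k) * c / real N" .
    thus ?thesis using s1 s3 e0 aL xs unfolding P_def a_def by auto
  qed
  have Pall: "P k" if "k < N" for k
    using that
  proof (induction k)
    case 0 then show ?case using L Fempty[of "-L/2" "-L/2"] by (simp add: P_def x0)
  next
    case (Suc k) then show ?case using step by simp
  qed
  have ord: "\<forall>k. Suc k < N \<longrightarrow> x k < x (Suc k)"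
    using step Pall by simp
  have "x (N - 1) < L / 2" using Pall[of "N - 1"] N by (simp add: P_def)
  hence "x (N - 1) < x 0 + L" using x0 by simp
  thus ?thesis using ord by (simp add: x_def)
qed

lemma phi_lip_on:
  fixes phi phi' :: "real \<Rightarrow> real"
  assumes pd: "\<And>r. r \<ge> 0 \<Longrightarrow> (phi has_real_derivative phi' r) (at r within {0..})"
    and pc: "continuous_on {0..} phi'"
  shows "\<exists>Lf\<ge>0. \<forall>u v. 0 \<le> u \<longrightarrow> u \<le> R \<longrightarrow> 0 \<le> v \<longrightarrow> v \<le> R \<longrightarrow> \<bar>phi u - phi v\<bar> \<le> Lf * \<bar>u - v\<bar>"
proof -
  have "compact (phi' ` {0..R})"
    by (rule compact_continuous_image[OF continuous_on_subset[OF pc]]) auto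
  then obtain B where B: "\<forall>x\<in>phi' ` {0..R}. norm x \<le> B"
    using compact_imp_bounded bounded_iff by metis
  define Lf where "Lf = max B 0"
  have "\<bar>phi u - phi v\<bar> \<le> Lf * \<bar>u - v\<bar>" if "0 \<le> u" "u \<le> R" "0 \<le> v" "v \<le> R" for u v
  proof -
    have "norm (phi u - phi v) \<le> Lf * norm (u - v)"
    proof (rule field_differentiable_bound[of "{0..R}"])
      show "convex {0..R::real}" by simp
      fix z :: real assume z: "z \<in> {0..R}"
      show "(phi has_field_derivative phi' z) (at z within {0..R})"
        using pd[of z] z by (auto intro: DERIV_subset)
      show "norm (phi' z) \<le> Lf" using B z by (force simp: Lf_def)
    qed (use that in auto)
    thus ?thesis by simp
  qed
  thus ?thesis by (intro exI[of _ Lf]) (auto simp: Lf_def)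
qed

lemma Kp_lip:
  fixes K' K'' :: "real \<Rightarrow> real"
  assumes kd: "\<And>z. z \<noteq> 0 \<Longrightarrow> (K' has_real_derivative K'' z) (at z)"
    and kb: "\<forall>z. z \<noteq> 0 \<longrightarrow> \<bar>K'' z\<bar> \<le> B2" and d: "0 < \<delta>"
  shows "\<bar>K' (max u \<delta>) - K' (max v \<delta>)\<bar> \<le> B2 * \<bar>u - v\<bar>"
    and "\<bar>K' (min u (-\<delta>)) - K' (min v (-\<delta>))\<bar> \<le> B2 * \<bar>u - v\<bar>"
proof -
  have B20: "0 \<le> B2" using kb[rule_format, of 1] by simp
  have "norm (K' (max u \<delta>) - K' (max v \<delta>)) \<le> B2 * norm (max u \<delta> - max v \<delta>)"
  proof (rule field_differentiable_bound[of "{\<delta>..}"])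
    fix z :: real assume z: "z \<in> {\<delta>..}"
    show "(K' has_field_derivative K'' z) (at z within {\<delta>..})"
      using kd[of z] z d by (auto intro: has_field_derivative_at_within)
    show "norm (K'' z) \<le> B2" using kb z d by auto
  qed auto
  also have "\<dots> \<le> B2 * \<bar>u - v\<bar>" using B20 by (intro mult_left_mono) auto
  finally show "\<bar>K' (max u \<delta>) - K' (max v \<delta>)\<bar> \<le> B2 * \<bar>u - v\<bar>" by simp
  have "norm (K' (min u (-\<delta>)) - K' (min v (-\<delta>))) \<le> B2 * norm (min u (-\<delta>) - min v (-\<delta>))"
  proof (rule field_differentiable_bound[of "{..-\<delta>}"])
    fix z :: real assume z: "z \<in> {..-\<delta>}"
    show "(K' has_field_derivative K'' z) (at z within {..-\<delta>})"
      using kd[of z] z d by (auto intro: has_field_derivative_at_within)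
    show "norm (K'' z) \<le> B2" using kb z d by auto
  qed auto
  also have "\<dots> \<le> B2 * \<bar>u - v\<bar>" using B20 by (intro mult_left_mono) auto
  finally show "\<bar>K' (min u (-\<delta>)) - K' (min v (-\<delta>))\<bar> \<le> B2 * \<bar>u - v\<bar>" by simp
qed

lemma phi_at:
  fixes phi phi' :: "real \<Rightarrow> real"
  assumes pd: "\<And>r. r \<ge> 0 \<Longrightarrow> (phi has_real_derivative phi' r) (at r within {0..})"
    and r: "0 < r"
  shows "(phi has_real_derivative phi' r) (at r)"
proof -
  have "(phi has_real_derivative phi' r) (at r within {0<..})"
    using pd[of r] r by (auto intro: DERIV_subset)
  moreover have "at r within {0<..} = at r" by (rule at_within_open) (use r in auto)
  ultimately show ?thesis by simp
qed

lemma quad_bound: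
  fixes F d p :: real
  assumes "0 < p"
  shows "F * d - p * d\<^sup>2 \<le> F\<^sup>2 / (4 * p)"
proof -
  have "0 \<le> p * (d - F / (2 * p))\<^sup>2" using assms by simp
  also have "p * (d - F / (2 * p))\<^sup>2 = p * d\<^sup>2 - F * d + F\<^sup>2 / (4 * p)"
    using assms by (simp add: power2_eq_square field_simps)
  finally show ?thesis by simp
qed

lemma cvx_lemma:
  fixes H h :: "real \<Rightarrow> real"
  assumes d: "\<And>y. (H has_real_derivative h y) (at y)"
    and anti: "\<And>u v. u \<le> v \<Longrightarrow> h v \<le> h u"
  shows "H y - H a \<le> h a * (y - a)"
proof (cases y a rule: linorder_cases)
  case less
  obtain z where z: "y < z" "z < a" "H a - H y = (a - y) * h z"
    using MVT2[OF less, of H h] d by blast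
  have "h a \<le> h z" using anti z by simp
  hence "h a * (a - y) \<le> h z * (a - y)" using less by (intro mult_right_mono) auto
  thus ?thesis using z by (simp add: algebra_simps)
next
  case equal then show ?thesis by simp
next
  case greater
  obtain z where z: "a < z" "z < y" "H y - H a = (y - a) * h z"
    using MVT2[OF greater, of H h] d by blast
  have "h z \<le> h a" using anti z by simp
  hence "h z * (y - a) \<le> h a * (y - a)" using greater by (intro mult_right_mono) auto
  thus ?thesis using z by (simp add: algebra_simps)
qed

lemma particle_exist:
  fixes K' K'' phi phi' :: "real \<Rightarrow> real" and x0 :: "nat \<Rightarrow> real"
  assumes N: "N \<ge> 1" and L: "L > 0" and c: "c > 0"
    and ord0: "\<forall>k. Suc k < N \<longrightarrow> x0 k < x0 (Suc k)" and wrap0: "x0 (N - 1) < x0 0 + L"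
    and kd: "\<And>z. z \<noteq> 0 \<Longrightarrow> (K' has_real_derivative K'' z) (at z)"
    and kb: "\<forall>z. z \<noteq> 0 \<longrightarrow> \<bar>K' z\<bar> \<le> B" and kb2: "\<forall>z. z \<noteq> 0 \<longrightarrow> \<bar>K'' z\<bar> \<le> B2"
    and pd: "\<And>r. r \<ge> 0 \<Longrightarrow> (phi has_real_derivative phi' r) (at r within {0..})"
    and pc: "continuous_on {0..} phi'"
    and p0: "phi 0 = 0" and pm: "strict_mono_on {0..} phi"
    and c2: "c2 > 0" and rb: "rhobar > 0" and pl: "\<And>r. r \<ge> rhobar \<Longrightarrow> phi r \<ge> c2 * r"
  shows "\<exists>x :: nat \<Rightarrow> real \<Rightarrow> real. (\<forall>k<N. x k 0 = x0 k) \<and>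
     (\<forall>t\<in>{0..<1}. \<forall>k. Suc k < N \<longrightarrow> x k t < x (Suc k) t) \<and>
     (\<forall>k<N. \<forall>t\<in>{0..<1}.
        ((\<lambda>s. x k s) has_real_derivative
           (- (c / real N) * (\<Sum>j\<in>{..<N} - {k}. K' (x k t - x j t))
            - (real N / c) * (phi (disc_rho L c N x k t) - phi (disc_rho L c N x (prev_idx N k) t))))
        (at t within {0..<1}))"
proof -
  define nx where "nx k = (if Suc k = N then 0 else Suc k)" for k
  define gp where "gp y k = (if Suc k = N then y 0 + L else y (Suc k)) - y k" for y :: "nat \<Rightarrow> real" and k
  define pv where "pv k = prev_idx N k" for k
  have Npos: "0 < real N" using N by simp
  have nx_lt: "nx k < N" if "k < N" for k using that N by (auto simp: nx_def)
  have pv_lt: "pv k < N" if "k < N" for k using that N by (auto simp: pv_def prev_idx_def)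
  have pv_nx: "pv (nx k) = k" if "k < N" for k using that N by (auto simp: pv_def prev_idx_def nx_def)
  have nx_pv: "nx (pv k) = k" if "k < N" for k using that N by (auto simp: pv_def prev_idx_def nx_def)
  have reidx: "(\<Sum>k<N. w (nx k)) = (\<Sum>k<N. w k)" for w :: "nat \<Rightarrow> real"
    by (rule sum.reindex_bij_witness[of "{..<N}" pv nx]) (auto simp: pv_nx nx_pv nx_lt pv_lt)
  have gp_eq: "gp y k = y (nx k) - y k + (if Suc k = N then L else 0)" for y k
    by (simp add: gp_def nx_def)
  have gsum: "(\<Sum>k<N. gp y k) = L" for y
  proof -
    have "(\<Sum>k<N. gp y k) = (\<Sum>k<N. y (nx k)) - (\<Sum>k<N. y k) + (\<Sum>k<N. if k = N - 1 then L else 0)"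
      unfolding gp_eq sum.distrib sum_subtractf using N
      by (intro arg_cong2[where f="(+)"] refl sum.cong) auto
    also have "\<dots> = L" using N by (simp add: reidx)
    finally show ?thesis .
  qed
  have gp0: "0 < gp x0 k" if "k < N" for k
  proof (cases "Suc k = N")
    case True
    then have "k = N - 1" by simp
    then show ?thesis using wrap0 True by (simp add: gp_def)
  next
    case False
    then have "Suc k < N" using that by simp
    then show ?thesis using ord0 False by (simp add: gp_def)
  qed
  define gmin where "gmin = Min (gp x0 ` {..<N})"
  have gne: "gp x0 ` {..<N} \<noteq> {}" using N by (simp add: lessThan_empty_iff)
  have gmin0: "0 < gmin" unfolding gmin_def using gne gp0 by (subst Min_gr_iff) auto
  have gminle: "gmin \<le> gp x0 k" if "k < N" for k unfolding gmin_def using that by (intro Min_le) auto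
  have pmono: "phi u \<le> phi v" if "0 \<le> u" "u \<le> v" for u v
  proof (cases "u = v")
    case False
    then have "u < v" using that by simp
    then show ?thesis using pm that unfolding strict_mono_on_def by (auto intro: less_imp_le)
  qed simp
  have pnn: "0 \<le> phi u" if "0 \<le> u" for u using pmono[of 0 u] that p0 by simp
  have pcont: "isCont phi r" if "0 < r" for r by (rule DERIV_isCont[OF phi_at[OF pd that]])
  have B0: "0 \<le> B" using kb[rule_format, of 1] by simp
  have B20: "0 \<le> B2" using kb2[rule_format, of 1] by simp
  define a where "a = L / real N"
  define s1 where "s1 = c / (real N * rhobar)"
  define k0 where "k0 = c2 * c / real N"
  define P0 where "P0 = phi (c / (real N * gmin))"
  define pa where "pa = phi (c / L)"
  define Cst where "Cst = c * (c * B)\<^sup>2 / 4"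
  define Q where "Q = L * P0 + Cst + pa * s1"
  define \<delta> where "\<delta> = min (min gmin a) (s1 * exp (- (Q + 1) / k0))"
  have a0: "0 < a" using L Npos by (simp add: a_def)
  have s10: "0 < s1" using c Npos rb by (simp add: s1_def)
  have k00: "0 < k0" using c Npos c2 by (simp add: k0_def)
  have P00: "0 \<le> P0" unfolding P0_def using c Npos gmin0 by (intro pnn) simp
  have pa0: "0 \<le> pa" unfolding pa_def using c L by (intro pnn) simp
  have d0: "0 < \<delta>" using gmin0 a0 s10 by (simp add: \<delta>_def)
  have d_gmin: "\<delta> \<le> gmin" and d_a: "\<delta> \<le> a" by (auto simp: \<delta>_def)
  have d_s1: "\<delta> \<le> s1"
  proof -
    have "exp (- (Q + 1) / k0) \<le> 1"
    proof -
      have "0 \<le> Q" unfolding Q_def Cst_def using L P00 pa0 s10 c by (intro add_nonneg_nonneg mult_nonneg_nonneg) auto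
      thus ?thesis using k00 by (simp add: divide_nonpos_pos)
    qed
    hence "s1 * exp (- (Q + 1) / k0) \<le> s1" using s10 by (simp add: mult_le_cancel_left1)
    thus ?thesis by (simp add: \<delta>_def)
  qed
  have lnd: "Q + 1 \<le> k0 * (ln s1 - ln \<delta>)"
  proof -
    have "ln \<delta> \<le> ln (s1 * exp (- (Q + 1) / k0))"
      using d0 s10 by (subst ln_le_cancel_iff) (auto simp: \<delta>_def)
    also have "\<dots> = ln s1 - (Q + 1) / k0" using s10 k00 by (simp add: ln_mult field_simps)
    finally have "(Q + 1) / k0 \<le> ln s1 - ln \<delta>" by simp
    thus ?thesis using k00 by (simp add: divide_le_eq mult.commute)
  qed
  define rt where "rt g = c / (real N * max g \<delta>)" for g
  define hh where "hh g = phi (rt g)" for g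
  have rt0: "0 < rt g" for g using c Npos d0 by (simp add: rt_def)
  have rt_le: "rt g \<le> c / (real N * \<delta>)" for g
    unfolding rt_def using c Npos d0 by (intro divide_left_mono mult_left_mono mult_pos_pos) auto
  have rt_anti: "rt v \<le> rt u" if "u \<le> v" for u v
    unfolding rt_def using c Npos d0 that by (intro divide_left_mono mult_left_mono mult_pos_pos) auto
  have hh0: "0 \<le> hh g" for g unfolding hh_def using rt0 by (intro pnn less_imp_le)
  have hh_anti: "hh v \<le> hh u" if "u \<le> v" for u v
    unfolding hh_def using rt0[of v] rt_anti[OF that] by (intro pmono) auto
  have hh_eq: "hh g = phi (c / (real N * g))" if "\<delta> \<le> g" for g
    using that by (simp add: hh_def rt_def)
  have hh_cont: "isCont hh g" for g
  proof -
    have "isCont rt g" unfolding rt_def using Npos d0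
      by (intro continuous_intros) (auto simp: max_def)
    thus ?thesis unfolding hh_def using pcont[OF rt0[of g]] by (rule isCont_o2)
  qed
  obtain Lf where Lf0: "0 \<le> Lf" and Lf: "\<And>u v. 0 \<le> u \<Longrightarrow> u \<le> c / (real N * \<delta>) \<Longrightarrow> 0 \<le> v \<Longrightarrow> v \<le> c / (real N * \<delta>) \<Longrightarrow> \<bar>phi u - phi v\<bar> \<le> Lf * \<bar>u - v\<bar>"
    using phi_lip_on[OF pd pc, of "c / (real N * \<delta>)"] by blast
  have rt_lip: "\<bar>rt u - rt v\<bar> \<le> c / (real N * \<delta>\<^sup>2) * \<bar>u - v\<bar>" for u v
  proof -
    define mu where "mu = max u \<delta>"
    define mv where "mv = max v \<delta>"
    have mu: "\<delta> \<le> mu" and mv: "\<delta> \<le> mv" by (auto simp: mu_def mv_def)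
    have mdiff: "\<bar>mv - mu\<bar> \<le> \<bar>u - v\<bar>" by (auto simp: mu_def mv_def max_def abs_if)
    have "rt u - rt v = (c / real N) * ((mv - mu) / (mu * mv))"
      using mu mv d0 Npos by (simp add: rt_def mu_def[symmetric] mv_def[symmetric] field_simps)
    hence "\<bar>rt u - rt v\<bar> = (c / real N) * (\<bar>mv - mu\<bar> / (mu * mv))"
      using c Npos mu mv d0 by (simp add: abs_mult)
    also have "\<dots> \<le> (c / real N) * (\<bar>u - v\<bar> / \<delta>\<^sup>2)"
    proof -
      have "\<delta>\<^sup>2 \<le> mu * mv" using mu mv d0 by (simp add: power2_eq_square mult_mono)
      hence "\<bar>mv - mu\<bar> / (mu * mv) \<le> \<bar>u - v\<bar> / \<delta>\<^sup>2"
        using mdiff d0 by (intro frac_le) auto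
      thus ?thesis using c Npos by (intro mult_left_mono) auto
    qed
    also have "\<dots> = c / (real N * \<delta>\<^sup>2) * \<bar>u - v\<bar>" by simp
    finally show ?thesis .
  qed
  have hh_lip: "\<bar>hh u - hh v\<bar> \<le> Lf * (c / (real N * \<delta>\<^sup>2)) * \<bar>u - v\<bar>" for u v
  proof -
    have "\<bar>hh u - hh v\<bar> \<le> Lf * \<bar>rt u - rt v\<bar>"
      unfolding hh_def using rt0[of u] rt0[of v] rt_le[of u] rt_le[of v] by (intro Lf) auto
    also have "\<dots> \<le> Lf * (c / (real N * \<delta>\<^sup>2) * \<bar>u - v\<bar>)"
      by (intro mult_left_mono rt_lip Lf0)
    finally show ?thesis by simp
  qed
  define Kt where "Kt k j z = (if j < k then K' (max z \<delta>) else K' (min z (-\<delta>)))" for k j :: nat and z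
  have Kt_lip: "\<bar>Kt k j u - Kt k j v\<bar> \<le> B2 * \<bar>u - v\<bar>" for k j u v
    using Kp_lip[OF kd kb2 d0, of u v] by (simp add: Kt_def)
  have Kt_b: "\<bar>Kt k j u\<bar> \<le> B" for k j u
    using kb d0 by (auto simp: Kt_def max_def min_def)
  define Ft where "Ft y k = - (c / real N) * (\<Sum>j\<in>{..<N} - {k}. Kt k j (y k - y j))" for y :: "nat \<Rightarrow> real" and k
  define fm where "fm y k = Ft y k - (real N / c) * (hh (gp y k) - hh (gp y (pv k)))" for y k
  have Ft_b: "\<bar>Ft y k\<bar> \<le> c * B" for y k
  proof -
    have "\<bar>\<Sum>j\<in>{..<N} - {k}. Kt k j (y k - y j)\<bar> \<le> (\<Sum>j\<in>{..<N} - {k}. B)"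
      by (rule order_trans[OF sum_abs sum_mono]) (rule Kt_b)
    also have "\<dots> = real (card ({..<N} - {k})) * B" by simp
    also have "\<dots> \<le> real N * B"
      using B0 by (intro mult_right_mono) (auto simp: card_Diff_subset_Int le_diff_conv)
    finally have "\<bar>\<Sum>j\<in>{..<N} - {k}. Kt k j (y k - y j)\<bar> \<le> real N * B" .
    hence "(c / real N) * \<bar>\<Sum>j\<in>{..<N} - {k}. Kt k j (y k - y j)\<bar> \<le> (c / real N) * (real N * B)"
      using c Npos by (intro mult_left_mono) auto
    thus ?thesis using Npos c by (simp add: Ft_def abs_mult)
  qed
  define Lp where "Lp = 2 * c * B2 + 4 * Lf / \<delta>\<^sup>2"
  have Lp0: "0 \<le> Lp" unfolding Lp_def using c B20 Lf0 by simp
  have lip: "\<bar>fm y k - fm z k\<bar> \<le> Lp * (\<Sum>j<N. \<bar>y j - z j\<bar>)" if k: "k < N" for y z k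
  proof -
    define S where "S = (\<Sum>j<N. \<bar>y j - z j\<bar>)"
    have yz: "\<bar>y j - z j\<bar> \<le> S" if "j < N" for j
      unfolding S_def using that by (intro member_le_sum) auto
    have S0: "0 \<le> S" unfolding S_def by (simp add: sum_nonneg)
    have gpd: "\<bar>gp y i - gp z i\<bar> \<le> 2 * S" if "i < N" for i
    proof (cases "Suc i = N")
      case True
      have "\<bar>gp y i - gp z i\<bar> = \<bar>(y 0 - z 0) - (y i - z i)\<bar>" using True by (simp add: gp_def algebra_simps)
      also have "\<dots> \<le> \<bar>y 0 - z 0\<bar> + \<bar>y i - z i\<bar>" by simp
      also have "\<dots> \<le> 2 * S" using yz[of 0] yz[of i] that N by simp
      finally show ?thesis .
    next
      case False
      hence si: "Suc i < N" using that by simp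
      have "\<bar>gp y i - gp z i\<bar> = \<bar>(y (Suc i) - z (Suc i)) - (y i - z i)\<bar>" using False by (simp add: gp_def algebra_simps)
      also have "\<dots> \<le> \<bar>y (Suc i) - z (Suc i)\<bar> + \<bar>y i - z i\<bar>" by simp
      also have "\<dots> \<le> 2 * S" using yz[OF si] yz[OF that] by simp
      finally show ?thesis .
    qed
    have Ftd: "\<bar>Ft y k - Ft z k\<bar> \<le> 2 * c * B2 * S"
    proof -
      have "\<bar>(\<Sum>j\<in>{..<N} - {k}. Kt k j (y k - y j)) - (\<Sum>j\<in>{..<N} - {k}. Kt k j (z k - z j))\<bar>
            = \<bar>\<Sum>j\<in>{..<N} - {k}. Kt k j (y k - y j) - Kt k j (z k - z j)\<bar>"
        by (simp add: sum_subtractf)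
      also have "\<dots> \<le> (\<Sum>j\<in>{..<N} - {k}. B2 * (2 * S))"
      proof (rule order_trans[OF sum_abs sum_mono])
        fix j assume j: "j \<in> {..<N} - {k}"
        have "\<bar>Kt k j (y k - y j) - Kt k j (z k - z j)\<bar> \<le> B2 * \<bar>(y k - y j) - (z k - z j)\<bar>" by (rule Kt_lip)
        also have "\<dots> \<le> B2 * (2 * S)"
        proof -
          have "\<bar>(y k - y j) - (z k - z j)\<bar> \<le> \<bar>y k - z k\<bar> + \<bar>y j - z j\<bar>" by simp
          also have "\<dots> \<le> 2 * S" using yz[OF k] yz[of j] j by simp
          finally show ?thesis using B20 by (intro mult_left_mono) auto
        qed
        finally show "\<bar>Kt k j (y k - y j) - Kt k j (z k - z j)\<bar> \<le> B2 * (2 * S)" .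
      qed
      also have "\<dots> = real (card ({..<N} - {k})) * (B2 * (2 * S))" by simp
      also have "\<dots> \<le> real N * (B2 * (2 * S))"
        using B20 S0 by (intro mult_right_mono) (auto simp: card_Diff_subset_Int le_diff_conv)
      finally have "\<bar>(\<Sum>j\<in>{..<N} - {k}. Kt k j (y k - y j)) - (\<Sum>j\<in>{..<N} - {k}. Kt k j (z k - z j))\<bar> \<le> real N * (B2 * (2 * S))" .
      hence "(c / real N) * \<bar>(\<Sum>j\<in>{..<N} - {k}. Kt k j (y k - y j)) - (\<Sum>j\<in>{..<N} - {k}. Kt k j (z k - z j))\<bar> \<le> (c / real N) * (real N * (B2 * (2 * S)))"
        using c Npos by (intro mult_left_mono) auto
      moreover have "\<bar>Ft y k - Ft z k\<bar> = (c / real N) * \<bar>(\<Sum>j\<in>{..<N} - {k}. Kt k j (y k - y j)) - (\<Sum>j\<in>{..<N} - {k}. Kt k j (z k - z j))\<bar>"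
      proof -
        have "Ft y k - Ft z k = - (c / real N) * ((\<Sum>j\<in>{..<N} - {k}. Kt k j (y k - y j)) - (\<Sum>j\<in>{..<N} - {k}. Kt k j (z k - z j)))"
          unfolding Ft_def by (simp only: right_diff_distrib)
        thus ?thesis using c Npos by (simp only: abs_mult abs_minus_cancel) simp
      qed
      ultimately show ?thesis using Npos by simp
    qed
    have hd: "\<bar>hh (gp y i) - hh (gp z i)\<bar> \<le> Lf * (c / (real N * \<delta>\<^sup>2)) * (2 * S)" if "i < N" for i
    proof -
      have "\<bar>hh (gp y i) - hh (gp z i)\<bar> \<le> Lf * (c / (real N * \<delta>\<^sup>2)) * \<bar>gp y i - gp z i\<bar>" by (rule hh_lip)
      also have "\<dots> \<le> Lf * (c / (real N * \<delta>\<^sup>2)) * (2 * S)"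
        using Lf0 c Npos gpd[OF that] by (intro mult_left_mono) auto
      finally show ?thesis .
    qed
    have "\<bar>fm y k - fm z k\<bar> \<le> \<bar>Ft y k - Ft z k\<bar> + (real N / c) * (\<bar>hh (gp y k) - hh (gp z k)\<bar> + \<bar>hh (gp y (pv k)) - hh (gp z (pv k))\<bar>)"
    proof -
      have "fm y k - fm z k = (Ft y k - Ft z k) - (real N / c) * ((hh (gp y k) - hh (gp z k)) - (hh (gp y (pv k)) - hh (gp z (pv k))))"
        by (simp add: fm_def algebra_simps)
      also have "\<bar>\<dots>\<bar> \<le> \<bar>Ft y k - Ft z k\<bar> + \<bar>(real N / c) * ((hh (gp y k) - hh (gp z k)) - (hh (gp y (pv k)) - hh (gp z (pv k))))\<bar>"
        by (rule abs_triangle_ineq4)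
      also have "\<bar>(real N / c) * ((hh (gp y k) - hh (gp z k)) - (hh (gp y (pv k)) - hh (gp z (pv k))))\<bar>
          \<le> (real N / c) * (\<bar>hh (gp y k) - hh (gp z k)\<bar> + \<bar>hh (gp y (pv k)) - hh (gp z (pv k))\<bar>)"
      proof -
        have "\<bar>(real N / c) * ((hh (gp y k) - hh (gp z k)) - (hh (gp y (pv k)) - hh (gp z (pv k))))\<bar>
              = (real N / c) * \<bar>(hh (gp y k) - hh (gp z k)) - (hh (gp y (pv k)) - hh (gp z (pv k)))\<bar>"
          using c Npos by (simp add: abs_mult)
        also have "\<dots> \<le> (real N / c) * (\<bar>hh (gp y k) - hh (gp z k)\<bar> + \<bar>hh (gp y (pv k)) - hh (gp z (pv k))\<bar>)"
          using c Npos by (intro mult_left_mono abs_triangle_ineq4) auto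
        finally show ?thesis .
      qed
      finally show ?thesis by simp
    qed
    also have "\<dots> \<le> 2 * c * B2 * S + (real N / c) * (Lf * (c / (real N * \<delta>\<^sup>2)) * (2 * S) + Lf * (c / (real N * \<delta>\<^sup>2)) * (2 * S))"
      using Ftd hd[OF k] hd[OF pv_lt[OF k]] c Npos by (intro add_mono mult_left_mono) auto
    also have "\<dots> = Lp * S" using c Npos d0 by (simp add: Lp_def field_simps)
    finally show ?thesis by (simp add: S_def)
  qed
  obtain X where X0: "\<And>k. k < N \<Longrightarrow> X 0 k = x0 k"
    and Xd: "\<And>k t. k < N \<Longrightarrow> t \<in> {0..1} \<Longrightarrow> ((\<lambda>s. X s k) has_real_derivative fm (X t) k) (at t within {0..1})"
    using picard[of N fm Lp 1 x0, OF lip Lp0] by fastforce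
  have dgp: "((\<lambda>s. gp (X s) k) has_real_derivative fm (X t) (nx k) - fm (X t) k) (at t within {0..1})"
    if k: "k < N" and t: "t \<in> {0..1}" for k t
  proof (cases "Suc k = N")
    case True
    have "((\<lambda>s. X s 0 + L - X s k) has_real_derivative fm (X t) 0 + 0 - fm (X t) k) (at t within {0..1})"
      using k t N by (intro DERIV_diff DERIV_add Xd DERIV_const) auto
    thus ?thesis using True by (simp add: gp_def nx_def)
  next
    case False
    hence sk: "Suc k < N" using k by simp
    have "((\<lambda>s. X s (Suc k) - X s k) has_real_derivative fm (X t) (Suc k) - fm (X t) k) (at t within {0..1})"
      using k t sk by (intro DERIV_diff Xd) auto
    thus ?thesis using False by (simp add: gp_def nx_def)
  qed
  obtain Ha where Ha: "\<And>y. (Ha has_real_derivative hh y) (at y)"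
  proof -
    obtain F where "\<forall>x. - \<infinity> < ereal x \<longrightarrow> ereal x < \<infinity> \<longrightarrow> (F has_vector_derivative hh x) (at x)"
      using einterval_antiderivative[of "- \<infinity>" "\<infinity>" hh] hh_cont by auto
    hence "\<And>y. (F has_real_derivative hh y) (at y)"
      by (simp add: has_real_derivative_iff_has_vector_derivative)
    thus ?thesis by (rule that)
  qed
  define G where "G y = - Ha y" for y
  have dG: "(G has_real_derivative - hh y) (at y)" for y
    unfolding G_def by (intro DERIV_minus Ha)
  have cvx: "G a' - hh a' * (y - a') \<le> G y" for y a'
    using cvx_lemma[of Ha hh y a', OF Ha hh_anti] by (simp add: G_def)
  define E where "E t = (\<Sum>k<N. G (gp (X t) k))" for t
  define DE where "DE t = (\<Sum>k<N. - hh (gp (X t) k) * (fm (X t) (nx k) - fm (X t) k))" for t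
  have dE: "(E has_real_derivative DE t) (at t within {0..1})" if t: "t \<in> {0..1}" for t
    unfolding E_def DE_def
  proof (rule DERIV_sum)
    fix k assume k: "k \<in> {..<N}"
    show "((\<lambda>x. G (gp (X x) k)) has_real_derivative - hh (gp (X t) k) * (fm (X t) (nx k) - fm (X t) k)) (at t within {0..1})"
      by (rule DERIV_chain2[OF dG dgp]) (use k t in auto)
  qed
  have dEb: "DE t \<le> Cst" for t
  proof -
    define v where "v = fm (X t)"
    define h where "h k = hh (gp (X t) k)" for k
    define d where "d k = h k - h (pv k)" for k
    have r1: "(\<Sum>k<N. h k * v (nx k)) = (\<Sum>k<N. h (pv k) * v k)"
    proof -
      have "(\<Sum>k<N. h k * v (nx k)) = (\<Sum>k<N. h (pv (nx k)) * v (nx k))"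
        by (rule sum.cong) (auto simp: pv_nx)
      also have "\<dots> = (\<Sum>k<N. h (pv k) * v k)" by (rule reidx)
      finally show ?thesis .
    qed
    have "DE t = (\<Sum>k<N. h k * v k) - (\<Sum>k<N. h k * v (nx k))"
      by (simp add: DE_def h_def v_def algebra_simps sum_subtractf)
    also have "\<dots> = (\<Sum>k<N. v k * d k)"
      by (simp add: r1 d_def algebra_simps sum_subtractf)
    also have "\<dots> = (\<Sum>k<N. Ft (X t) k * d k - (real N / c) * (d k)\<^sup>2)"
      by (intro sum.cong) (auto simp: v_def fm_def d_def h_def pv_def power2_eq_square algebra_simps)
    also have "\<dots> \<le> (\<Sum>k<N. (Ft (X t) k)\<^sup>2 / (4 * (real N / c)))"
      using c Npos by (intro sum_mono quad_bound) auto
    also have "\<dots> \<le> (\<Sum>k<N. (c * B)\<^sup>2 / (4 * (real N / c)))"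
    proof (rule sum_mono)
      fix k
      have "\<bar>Ft (X t) k\<bar>\<^sup>2 \<le> (c * B)\<^sup>2" by (rule power_mono[OF Ft_b]) simp
      thus "(Ft (X t) k)\<^sup>2 / (4 * (real N / c)) \<le> (c * B)\<^sup>2 / (4 * (real N / c))"
        using c Npos by (intro divide_right_mono) auto
    qed
    also have "\<dots> = Cst" using c Npos by (simp add: Cst_def field_simps)
    finally show ?thesis .
  qed
  have Cst0: "0 \<le> Cst" unfolding Cst_def using c by simp
  have Egrow: "E t \<le> E 0 + Cst * t" if t: "t \<in> {0..1}" for t
  proof -
    have t0: "0 \<le> t" using t by simp
    have "(\<lambda>s. E s - Cst * s) t \<le> (\<lambda>s. E s - Cst * s) 0"
    proof (rule DERIV_nonpos_imp_decreasing_open[OF t0])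
      fix x assume x: "0 < x" "x < t"
      have "((\<lambda>s. E s - Cst * s) has_real_derivative DE x - Cst * 1) (at x within {0..1})"
        using x t by (intro DERIV_diff dE DERIV_cmult DERIV_ident) auto
      moreover have "at x within {0..1} = at x" using x t by (intro at_within_Icc_at) auto
      ultimately have "((\<lambda>s. E s - Cst * s) has_real_derivative DE x - Cst) (at x)" by simp
      moreover have "DE x - Cst \<le> 0" using dEb[of x] by simp
      ultimately show "\<exists>y. ((\<lambda>s. E s - Cst * s) has_real_derivative y) (at x) \<and> y \<le> 0" by blast
    next
      have "continuous_on {0..1} (\<lambda>s. E s - Cst * s)"
        by (rule DERIV_continuous_on, rule DERIV_diff[OF dE DERIV_cmult[OF DERIV_ident]]) auto
      thus "continuous_on {0..t} (\<lambda>s. E s - Cst * s)" by (rule continuous_on_subset) (use t in auto)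
    qed
    thus ?thesis by simp
  qed
  have X0gp: "gp (X 0) k = gp x0 k" if k: "k < N" for k
  proof (cases "Suc k = N")
    case True then show ?thesis using X0[OF k] X0[of 0] N by (simp add: gp_def)
  next
    case False
    hence "Suc k < N" using k by simp
    then show ?thesis using X0[OF k] X0 False by (simp add: gp_def)
  qed
  have Na: "real N * a = L" using Npos by (simp add: a_def)
  have E0b: "E 0 - real N * G a \<le> L * P0"
  proof -
    have "E 0 - real N * G a = (\<Sum>k<N. G (gp x0 k) - G a)" by (simp add: E_def X0gp sum_subtractf)
    also have "\<dots> \<le> (\<Sum>k<N. a * P0)"
    proof (rule sum_mono)
      fix k assume k: "k \<in> {..<N}"
      define g where "g = gp x0 k"
      have g0: "0 < g" and gg: "gmin \<le> g" using gp0 gminle k by (auto simp: g_def)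
      have "G g - G a \<le> hh g * (a - g)" using cvx[where y=a and a'=g] by simp
      also have "\<dots> \<le> a * P0"
      proof (cases "a \<le> g")
        case True
        hence "hh g * (a - g) \<le> 0" using hh0[of g] by (simp add: mult_nonneg_nonpos)
        also have "0 \<le> a * P0" using a0 P00 by simp
        finally show ?thesis .
      next
        case False
        have "hh g \<le> hh gmin" by (rule hh_anti[OF gg])
        also have "hh gmin = P0" using d_gmin by (simp add: hh_eq P0_def)
        finally have "hh g \<le> P0" .
        hence "hh g * (a - g) \<le> P0 * (a - g)" using False by (intro mult_right_mono) auto
        also have "\<dots> \<le> P0 * a" using P00 g0 by (intro mult_left_mono) auto
        finally show ?thesis by (simp add: mult.commute)
      qed
      finally show "G (gp x0 k) - G a \<le> a * P0" by (simp add: g_def)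
    qed
    also have "\<dots> = L * P0" using Na by simp
    finally show ?thesis .
  qed
  have Dsum: "G (gp (X t) k) - G a + hh a * (gp (X t) k - a) \<le> E t - real N * G a" if k: "k < N" for t k
  proof -
    define br where "br j = G (gp (X t) j) - G a + hh a * (gp (X t) j - a)" for j
    have br0: "0 \<le> br j" for j using cvx[where y="gp (X t) j" and a'=a] by (simp add: br_def algebra_simps)
    have "br k \<le> (\<Sum>j<N. br j)" by (rule member_le_sum) (use k br0 in auto)
    also have "(\<Sum>j<N. br j) = E t - real N * G a + hh a * ((\<Sum>j<N. gp (X t) j) - real N * a)"
      by (simp add: br_def E_def sum.distrib sum_subtractf sum_distrib_left right_diff_distrib)
    also have "\<dots> = E t - real N * G a" using gsum Na by simp
    finally show ?thesis by (simp add: br_def)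
  qed
  have lnb: "G s1 + k0 * (ln s1 - ln \<delta>) \<le> G \<delta>"
  proof -
    have "(\<lambda>y. G y + k0 * ln y) s1 \<le> (\<lambda>y. G y + k0 * ln y) \<delta>"
    proof (rule DERIV_nonpos_imp_decreasing_open[OF d_s1])
      fix x assume x: "\<delta> < x" "x < s1"
      have x0: "0 < x" using x d0 by simp
      have "((\<lambda>y. G y + k0 * ln y) has_real_derivative - hh x + k0 * inverse x) (at x)"
        by (rule DERIV_add[OF dG DERIV_cmult[OF DERIV_ln[OF x0]]])
      moreover have "- hh x + k0 * inverse x \<le> 0"
      proof -
        have "hh x = phi (c / (real N * x))" using x by (intro hh_eq) simp
        moreover have "rhobar \<le> c / (real N * x)"
        proof -
          have "real N * x * rhobar \<le> real N * s1 * rhobar" using x Npos rb by (intro mult_right_mono mult_left_mono) auto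
          also have "\<dots> = c" using Npos rb by (simp add: s1_def)
          finally show ?thesis using Npos x0 by (simp add: le_divide_eq mult.commute mult.left_commute)
        qed
        ultimately have "c2 * (c / (real N * x)) \<le> hh x" using pl[of "c / (real N * x)"] by (simp only:)
        moreover have "k0 * inverse x = c2 * (c / (real N * x))" by (simp add: k0_def field_simps)
        ultimately show ?thesis by simp
      qed
      ultimately show "\<exists>y. ((\<lambda>y. G y + k0 * ln y) has_real_derivative y) (at x) \<and> y \<le> 0" by blast
    next
      show "continuous_on {\<delta>..s1} (\<lambda>y. G y + k0 * ln y)"
      proof (rule DERIV_continuous_on)
        fix x assume x: "x \<in> {\<delta>..s1}"
        hence x0: "0 < x" using d0 by simp
        show "((\<lambda>y. G y + k0 * ln y) has_real_derivative - hh x + k0 * inverse x) (at x within {\<delta>..s1})"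
          by (rule has_field_derivative_at_within[OF DERIV_add[OF dG DERIV_cmult[OF DERIV_ln[OF x0]]]])
      qed
    qed
    thus ?thesis by (simp add: algebra_simps)
  qed
  have ha: "hh a = pa"
  proof -
    have "hh a = phi (c / (real N * a))" using d_a by (rule hh_eq)
    thus ?thesis using Na by (simp add: pa_def)
  qed
  have Dlow: "L * P0 + Cst + 1 \<le> G g - G a + hh a * (g - a)" if g: "g \<le> \<delta>" for g
  proof -
    have c1: "G \<delta> - hh \<delta> * (g - \<delta>) \<le> G g" by (rule cvx)
    have c2': "G a - hh a * (s1 - a) \<le> G s1" by (rule cvx)
    have "hh a \<le> hh \<delta>" by (rule hh_anti[OF d_a])
    hence c3: "0 \<le> (hh a - hh \<delta>) * (g - \<delta>)" using g by (intro mult_nonpos_nonpos) auto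
    have c4: "hh a * (s1 - \<delta>) \<le> pa * s1" using ha pa0 d0 by (simp add: mult_left_mono)
    have "G g - G a + hh a * (g - a) \<ge> (G \<delta> - G a + hh a * (\<delta> - a)) + (hh a - hh \<delta>) * (g - \<delta>)"
      using c1 by (simp add: algebra_simps)
    moreover have "G \<delta> - G a + hh a * (\<delta> - a) \<ge> k0 * (ln s1 - ln \<delta>) - hh a * (s1 - \<delta>)"
      using c2' lnb by (simp add: algebra_simps)
    ultimately show ?thesis using c3 c4 lnd by (simp add: Q_def)
  qed
  have gap: "\<delta> < gp (X t) k" if t: "t \<in> {0..1}" and k: "k < N" for t k
  proof (rule ccontr)
    assume "\<not> \<delta> < gp (X t) k"
    hence "L * P0 + Cst + 1 \<le> G (gp (X t) k) - G a + hh a * (gp (X t) k - a)" by (intro Dlow) simp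
    also have "\<dots> \<le> E t - real N * G a" by (rule Dsum[OF k])
    also have "\<dots> \<le> E 0 + Cst * t - real N * G a" using Egrow[OF t] by simp
    also have "\<dots> \<le> L * P0 + Cst * t" using E0b by simp
    also have "\<dots> \<le> L * P0 + Cst" using t Cst0 by (simp add: mult_left_le)
    finally show False by simp
  qed
  define x where "x k t = X t k" for k t
  have gpx: "next_pos L N x k t - x k t = gp (X t) k" for k t
    by (simp add: next_pos_def x_def gp_def)
  have ordX: "X t k < X t (Suc k)" if t: "t \<in> {0..1}" and sk: "Suc k < N" for t k
    using gap[OF t, of k] sk d0 by (simp add: gp_def)
  have distX: "\<delta> \<le> X t k - X t j" if t: "t \<in> {0..1}" and jk: "j < k" and kN: "k < N" for t j k
    using jk kN
  proof (induction k)
    case 0 then show ?case by simp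
  next
    case (Suc k)
    have g: "\<delta> < X t (Suc k) - X t k" using gap[OF t, of k] Suc.prems by (simp add: gp_def)
    show ?case
    proof (cases "j = k")
      case True then show ?thesis using g by simp
    next
      case False
      hence "\<delta> \<le> X t k - X t j" using Suc by simp
      thus ?thesis using g d0 by simp
    qed
  qed
  have hhx: "hh (gp (X t) i) = phi (disc_rho L c N x i t)" if t: "t \<in> {0..1}" and i: "i < N" for t i
  proof -
    have "hh (gp (X t) i) = phi (c / (real N * gp (X t) i))"
      using gap[OF t i] by (intro hh_eq) simp
    thus ?thesis by (simp add: disc_rho_def gpx)
  qed
  have fm_eq: "fm (X t) k = - (c / real N) * (\<Sum>j\<in>{..<N} - {k}. K' (x k t - x j t))
            - (real N / c) * (phi (disc_rho L c N x k t) - phi (disc_rho L c N x (prev_idx N k) t))"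
    if t: "t \<in> {0..1}" and k: "k < N" for t k
  proof -
    have "(\<Sum>j\<in>{..<N} - {k}. Kt k j (X t k - X t j)) = (\<Sum>j\<in>{..<N} - {k}. K' (x k t - x j t))"
    proof (rule sum.cong)
      fix j assume j: "j \<in> {..<N} - {k}"
      show "Kt k j (X t k - X t j) = K' (x k t - x j t)"
      proof (cases "j < k")
        case True
        then show ?thesis using distX[OF t True k] by (simp add: Kt_def x_def max_def)
      next
        case False
        hence "k < j" using j by auto
        then show ?thesis using distX[OF t \<open>k < j\<close>] j False by (simp add: Kt_def x_def min_def)
      qed
    qed simp
    thus ?thesis using hhx[OF t k] hhx[OF t pv_lt[OF k]] by (simp add: fm_def Ft_def pv_def)
  qed
  show ?thesis
  proof (intro exI[of _ x] conjI allI impI ballI)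
    fix k assume k: "k < N"
    show "x k 0 = x0 k" using X0[OF k] by (simp add: x_def)
  next
    fix t :: real and k :: nat assume t: "t \<in> {0..<1}" and sk: "Suc k < N"
    show "x k t < x (Suc k) t" using ordX[OF _ sk, of t] t by (simp add: x_def)
  next
    fix k :: nat and t :: real assume k: "k < N" and t: "t \<in> {0..<1}"
    have t': "t \<in> {0..1}" using t by simp
    have "((\<lambda>s. X s k) has_real_derivative fm (X t) k) (at t within {0..<1})"
      by (rule DERIV_subset[OF Xd[OF k t']]) auto
    thus "((\<lambda>s. x k s) has_real_derivative
           (- (c / real N) * (\<Sum>j\<in>{..<N} - {k}. K' (x k t - x j t))
            - (real N / c) * (phi (disc_rho L c N x k t) - phi (disc_rho L c N x (prev_idx N k) t))))
        (at t within {0..<1})"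
      using fm_eq[OF t' k] by (simp add: x_def)
  qed
qed

theorem lemma4p6:
  fixes K K' K'' :: "real \<Rightarrow> real"
    and W W' phi phi' :: "real \<Rightarrow> real"
    and c0 c1 c2 rhohat rhobar :: real
  assumes K_even: "\<And>z. K z = K \<bar>z\<bar>"
    and K_cont: "continuous_on UNIV K"
    and K_d1: "\<And>z. z \<noteq> 0 \<Longrightarrow> (K has_real_derivative K' z) (at z)"
    and K_d2: "\<And>z. z \<noteq> 0 \<Longrightarrow> (K' has_real_derivative K'' z) (at z)"
    and K''_cont: "continuous_on (UNIV - {0}) K''"
    and K_bdd: "\<exists>B. \<forall>z. \<bar>K z\<bar> \<le> B"
    and K'_bdd: "\<exists>B. \<forall>z. z \<noteq> 0 \<longrightarrow> \<bar>K' z\<bar> \<le> B"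
    and K''_bdd: "\<exists>B. \<forall>z. z \<noteq> 0 \<longrightarrow> \<bar>K'' z\<bar> \<le> B"
    and K'_L1: "integrable lborel K'"
    and W_nonneg: "\<And>r. r \<ge> 0 \<Longrightarrow> W r \<ge> 0"
    and W_deriv: "\<And>r. r \<ge> 0 \<Longrightarrow> (W has_real_derivative W' r) (at r within {0..})"
    and phi_def: "\<And>r. phi r = r * W' r - W r"
    and phi_deriv: "\<And>r. r \<ge> 0 \<Longrightarrow> (phi has_real_derivative phi' r) (at r within {0..})"
    and phi'_cont: "continuous_on {0..} phi'"
    and phi_0: "phi 0 = 0"
    and phi_mono: "strict_mono_on {0..} phi"
    and c0_pos: "c0 > 0"
    and phi'_bound: "\<And>r. r \<ge> 0 \<Longrightarrow> phi' r * r \<le> c0 * phi r"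
    and phi_bound: "\<And>r. r \<ge> 0 \<Longrightarrow> phi r \<le> max r (c0 * W r)"
    and c12_pos: "c1 > 0" "c2 > 0"
    and rho_hb: "0 < rhohat" "rhohat < 1" "1 < rhobar"
    and phi_small: "\<And>r. 0 \<le> r \<Longrightarrow> r \<le> rhohat \<Longrightarrow> phi r \<le> c1 * r"
    and phi_large: "\<And>r. r \<ge> rhobar \<Longrightarrow> phi r \<ge> c2 * r"
  shows "\<forall>M::real. \<exists>T0>0. \<forall>L rho0.
           L > 0 \<longrightarrow> rho0 \<in> borel_measurable lborel \<longrightarrow>
           (\<forall>y. rho0 (y + L) = rho0 y) \<longrightarrow> (\<forall>y. rho0 y \<ge> 0) \<longrightarrow>
           esssup lborel (\<lambda>y. ereal (rho0 y)) = ereal M \<longrightarrow>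
           0 < mass_L L rho0 \<longrightarrow> mass_L L rho0 \<le> 1 \<longrightarrow>
           (\<forall>N::nat. N \<ge> 1 \<longrightarrow> particle_well_defined K' phi L rho0 N T0)"
proof -
  have main: "particle_well_defined K' phi L rho0 N 1"
    if L: "L > 0" and meas: "rho0 \<in> borel_measurable lborel" and nn: "\<forall>y. rho0 y \<ge> 0"
      and ess: "esssup lborel (\<lambda>y. ereal (rho0 y)) = ereal M"
      and cpos: "0 < mass_L L rho0" and N: "N \<ge> 1" for L rho0 N M
  proof -
    have io: "(\<forall>k. Suc k < N \<longrightarrow> init_pos L rho0 N k < init_pos L rho0 N (Suc k))
       \<and> init_pos L rho0 N (N - 1) < init_pos L rho0 N 0 + L"
      by (rule init_props[OF L meas nn ess cpos N])
    obtain B where kb: "\<forall>z. z \<noteq> 0 \<longrightarrow> \<bar>K' z\<bar> \<le> B" using K'_bdd by blast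
    obtain B2 where kb2: "\<forall>z. z \<noteq> 0 \<longrightarrow> \<bar>K'' z\<bar> \<le> B2" using K''_bdd by blast
    have rb: "rhobar > 0" using rho_hb by simp
    have "\<exists>x :: nat \<Rightarrow> real \<Rightarrow> real. (\<forall>k<N. x k 0 = init_pos L rho0 N k) \<and>
     (\<forall>t\<in>{0..<1}. \<forall>k. Suc k < N \<longrightarrow> x k t < x (Suc k) t) \<and>
     (\<forall>k<N. \<forall>t\<in>{0..<1}.
        ((\<lambda>s. x k s) has_real_derivative
           (- (mass_L L rho0 / real N) * (\<Sum>j\<in>{..<N} - {k}. K' (x k t - x j t))
            - (real N / mass_L L rho0) * (phi (disc_rho L (mass_L L rho0) N x k t) - phi (disc_rho L (mass_L L rho0) N x (prev_idx N k) t))))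
        (at t within {0..<1}))"
      by (rule particle_exist[OF N L cpos _ _ K_d2 kb kb2 phi_deriv phi'_cont phi_0 phi_mono c12_pos(2) rb phi_large])
         (use io in auto)
    thus ?thesis unfolding particle_well_defined_def Let_def by simp
  qed
  show ?thesis
    by (intro allI exI[of _ "1::real"] conjI impI) (auto intro: main)
qed

end
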